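(* Let $(G,k)$ be an instance of \textsc{Bicolored $P_3$ Deletion} such that $G$ is nice, and let $p$ be the number of bicolored $P_3$s in $G$. Then for every two edges $e_1,e_2$ forming a bicolored $P_3$ in $G$ there is an edge $e\in\{e_1,e_2\}$ such that (a) $G-e$ contains exactly $p-1$ bicolored $P_3$s, and (b) $G-e$ is nice.
   Context: A two-colored graph $G=(V,E_r,E_b)$ is a finite simple undirected graph whose edge set $E=E_r\uplus E_b$ is partitioned into red and blue edges. A bicolored $P_3$ is an induced subgraph on three vertices $u,v,w$ with edges $\{u,v\},\{v,w\}$ of different colors and $\{u,w\}\notin E$; these two edges form the bicolored $P_3$. The following induced subgraphs are defined up to swapping the two colors (both versions count). An LC-Diamond on $u,v,w,z$: edges exactly $\{u,v\}$ blue, $\{v,w\}$ red, $\{u,z\}$ blue, $\{v,z\}$ red, $\{w,z\}$ blue. An LO-Diamond on $u,v,w,z$: edges exactly $\{u,v\}$ blue, $\{v,w\}$ red, $\{u,z\}$ blue, $\{v,z\}$ blue, $\{w,z\}$ red. An IIZ-Diamond on $u,v,w,z$: edges exactly $\{u,v\}$ blue, $\{v,w\}$ red, $\{u,z\}$ red, $\{v,z\}$ blue, $\{w,z\}$ blue. A CC-Hourglass on $u,v,w,z_1,z_2$: edges exactly $\{u,v\}$ blue, $\{v,w\}$ red, $\{u,z_1\}$ blue, $\{v,z_1\}$ red, $\{v,z_2\}$ blue, $\{w,z_2\}$ red. A two-colored graph is nice if it contains none of LC-Diamond, LO-Diamond, IIZ-Diamond, CC-Hourglass as an induced subgraph and every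 edge forms a bicolored $P_3$ with at most one other edge. \textsc{Bicolored $P_3$ Deletion}: given $G$ and $k\in\mathbb{N}$, decide whether some $S\subseteq E$ with $|S|\le k$ makes $G-S$ free of induced bicolored $P_3$s. *)

theory Defs
  imports Main
begin

definition two_colored_graph :: "'a set \<Rightarrow> 'a set set \<Rightarrow> 'a set set \<Rightarrow> bool" where
  "two_colored_graph V Er Eb \<longleftrightarrow> finite V \<and> Er \<inter> Eb = {} \<and>
     (\<forall>e \<in> Er \<union> Eb. \<exists>u v. u \<noteq> v \<and> u \<in> V \<and> v \<in> V \<and> e = {u, v})"

definition bicolored_P3 :: "'a set set \<Rightarrow> 'a set set \<Rightarrow> 'a \<Rightarrow> 'a \<Rightarrow> 'a \<Rightarrow> bool" where
  "bicolored_P3 Er Eb u v w \<longleftrightarrow> u \<noteq> v \<and> v \<noteq> w \<and> u \<noteq> w \<and>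
     (({u,v} \<in> Er \<and> {v,w} \<in> Eb) \<or> ({u,v} \<in> Eb \<and> {v,w} \<in> Er)) \<and>
     {u,w} \<notin> Er \<union> Eb"

definition forms_bP3 :: "'a set set \<Rightarrow> 'a set set \<Rightarrow> 'a set \<Rightarrow> 'a set \<Rightarrow> bool" where
  "forms_bP3 Er Eb e1 e2 \<longleftrightarrow>
     (\<exists>u v w. bicolored_P3 Er Eb u v w \<and> {e1, e2} = {{u,v},{v,w}})"

text \<open>The set of bicolored P3s, each identified with its (unordered) pair of edges.\<close>
definition bP3s :: "'a set set \<Rightarrow> 'a set set \<Rightarrow> 'a set set set" where
  "bP3s Er Eb = {{{u,v},{v,w}} | u v w. bicolored_P3 Er Eb u v w}"

definition num_bP3 :: "'a set set \<Rightarrow> 'a set set \<Rightarrow> nat" where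
  "num_bP3 Er Eb = card (bP3s Er Eb)"

text \<open>Induced subgraphs, with A, B the two colour classes (both orders are used).\<close>
definition LC_diamond :: "'a set set \<Rightarrow> 'a set set \<Rightarrow> 'a \<Rightarrow> 'a \<Rightarrow> 'a \<Rightarrow> 'a \<Rightarrow> bool" where
  "LC_diamond A B u v w z \<longleftrightarrow> distinct [u,v,w,z] \<and>
     {u,v} \<in> A \<and> {v,w} \<in> B \<and> {u,z} \<in> A \<and> {v,z} \<in> B \<and> {w,z} \<in> A \<and>
     {u,w} \<notin> A \<union> B"

definition LO_diamond :: "'a set set \<Rightarrow> 'a set set \<Rightarrow> 'a \<Rightarrow> 'a \<Rightarrow> 'a \<Rightarrow> 'a \<Rightarrow> bool" where
  "LO_diamond A B u v w z \<longleftrightarrow> distinct [u,v,w,z] \<and>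
     {u,v} \<in> A \<and> {v,w} \<in> B \<and> {u,z} \<in> A \<and> {v,z} \<in> A \<and> {w,z} \<in> B \<and>
     {u,w} \<notin> A \<union> B"

definition IIZ_diamond :: "'a set set \<Rightarrow> 'a set set \<Rightarrow> 'a \<Rightarrow> 'a \<Rightarrow> 'a \<Rightarrow> 'a \<Rightarrow> bool" where
  "IIZ_diamond A B u v w z \<longleftrightarrow> distinct [u,v,w,z] \<and>
     {u,v} \<in> A \<and> {v,w} \<in> B \<and> {u,z} \<in> B \<and> {v,z} \<in> A \<and> {w,z} \<in> A \<and>
     {u,w} \<notin> A \<union> B"

definition CC_hourglass :: "'a set set \<Rightarrow> 'a set set \<Rightarrow> 'a \<Rightarrow> 'a \<Rightarrow> 'a \<Rightarrow> 'a \<Rightarrow> 'a \<Rightarrow> bool" where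
  "CC_hourglass A B u v w z1 z2 \<longleftrightarrow> distinct [u,v,w,z1,z2] \<and>
     {u,v} \<in> A \<and> {v,w} \<in> B \<and> {u,z1} \<in> A \<and> {v,z1} \<in> B \<and> {v,z2} \<in> A \<and> {w,z2} \<in> B \<and>
     {u,w} \<notin> A \<union> B \<and> {u,z2} \<notin> A \<union> B \<and> {w,z1} \<notin> A \<union> B \<and> {z1,z2} \<notin> A \<union> B"

definition has_forbidden :: "'a set \<Rightarrow> 'a set set \<Rightarrow> 'a set set \<Rightarrow> bool" where
  "has_forbidden V Er Eb \<longleftrightarrow>
     (\<exists>(A,B) \<in> {(Eb,Er),(Er,Eb)}. \<exists>u\<in>V. \<exists>v\<in>V. \<exists>w\<in>V. \<exists>z\<in>V.
        LC_diamond A B u v w z \<or> LO_diamond A B u v w z \<or> IIZ_diamond A B u v w z \<or>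
        (\<exists>z2\<in>V. CC_hourglass A B u v w z z2))"

definition nice :: "'a set \<Rightarrow> 'a set set \<Rightarrow> 'a set set \<Rightarrow> bool" where
  "nice V Er Eb \<longleftrightarrow> \<not> has_forbidden V Er Eb \<and>
     (\<forall>e \<in> Er \<union> Eb. card {e'. forms_bP3 Er Eb e e'} \<le> 1)"

end

theory Submission
  imports Defs
begin

lemma tcg_sym: "two_colored_graph V A B = two_colored_graph V B A"
  unfolding two_colored_graph_def by (auto simp: Un_commute Int_commute)

lemma bP3_sym: "bicolored_P3 A B = bicolored_P3 B A"
  unfolding bicolored_P3_def by (intro ext) auto

lemma bP3_rev: "bicolored_P3 A B u v w = bicolored_P3 A B w v u"
  unfolding bicolored_P3_def by (auto simp: insert_commute)

lemma forms_sym: "forms_bP3 A B = forms_bP3 B A"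
  unfolding forms_bP3_def by (simp add: bP3_sym)

lemma bP3s_sym: "bP3s A B = bP3s B A"
  unfolding bP3s_def by (simp add: bP3_sym)

lemma hasf_sym: "has_forbidden V A B = has_forbidden V B A"
proof -
  have "{(B,A),(A,B)} = {(A,B),(B,A)}" by auto
  then show ?thesis by (simp only: has_forbidden_def)
qed

lemma nice_sym: "nice V A B = nice V B A"
  unfolding nice_def by (simp add: hasf_sym forms_sym Un_commute)

lemma num_sym: "num_bP3 A B = num_bP3 B A"
  unfolding num_bP3_def by (simp add: bP3s_sym)

lemma tcg_swap: "two_colored_graph V A B \<Longrightarrow> two_colored_graph V B A"
  using tcg_sym by blast
lemma nice_swap: "nice V A B \<Longrightarrow> nice V B A"
  using nice_sym by blast
lemma bP3_swap: "bicolored_P3 A B u v w \<Longrightarrow> bicolored_P3 B A w v u"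
  using bP3_sym bP3_rev by metis

lemma edge_props:
  assumes "two_colored_graph V A B" "{a,b} \<in> A \<union> B"
  shows "a \<noteq> b \<and> a \<in> V \<and> b \<in> V"
proof -
  obtain x y where "x \<noteq> y" "x \<in> V" "y \<in> V" "{a,b} = {x,y}"
    using assms unfolding two_colored_graph_def by blast
  then show ?thesis by (auto simp: doubleton_eq_iff)
qed

lemma finite_E:
  assumes "two_colored_graph V A B"
  shows "finite (A \<union> B)"
proof -
  have "A \<union> B \<subseteq> Pow V"
  proof
    fix e assume "e \<in> A \<union> B"
    then obtain x y where "x \<in> V" "y \<in> V" "e = {x,y}"
      using assms unfolding two_colored_graph_def by meson
    then show "e \<in> Pow V" by auto
  qed
  moreover have "finite V" using assms unfolding two_colored_graph_def by blast
  ultimately show ?thesis by (meson finite_Pow_iff finite_subset)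
qed

lemma disj: "two_colored_graph V A B \<Longrightarrow> x \<in> A \<Longrightarrow> x \<in> B \<Longrightarrow> False"
  unfolding two_colored_graph_def by blast

lemma forms_edge:
  assumes "forms_bP3 A B e e'" shows "e' \<in> A \<union> B" "e \<in> A \<union> B"
  using assms unfolding forms_bP3_def bicolored_P3_def by (auto simp: doubleton_eq_iff)

lemma partner_unique:
  assumes "two_colored_graph V A B" "nice V A B" "forms_bP3 A B e e1" "forms_bP3 A B e e2"
  shows "e1 = e2"
proof -
  have e: "e \<in> A \<union> B" using forms_edge assms by blast
  have sub: "{e'. forms_bP3 A B e e'} \<subseteq> A \<union> B" using forms_edge by blast
  have fin: "finite {e'. forms_bP3 A B e e'}" using finite_E[OF assms(1)] sub finite_subset by blast
  have "card {e'. forms_bP3 A B e e'} \<le> Suc 0" using assms(2) e unfolding nice_def by auto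
  then show ?thesis using card_le_Suc0_iff_eq[OF fin] assms(3,4) by blast
qed

lemma hf_LC:
  assumes "two_colored_graph V A B" "LC_diamond A B u v w z \<or> LC_diamond B A u v w z"
  shows "has_forbidden V A B"
proof -
  have "{u,v} \<in> A \<union> B" "{v,w} \<in> A \<union> B" "{u,z} \<in> A \<union> B"
    using assms(2) unfolding LC_diamond_def by auto
  then have "u \<in> V" "v \<in> V" "w \<in> V" "z \<in> V" using edge_props[OF assms(1)] by blast+
  then show ?thesis using assms(2) unfolding has_forbidden_def by blast
qed

lemma hf_LO:
  assumes "two_colored_graph V A B" "LO_diamond A B u v w z \<or> LO_diamond B A u v w z"
  shows "has_forbidden V A B"
proof -
  have "{u,v} \<in> A \<union> B" "{v,w} \<in> A \<union> B" "{u,z} \<in> A \<union> B"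
    using assms(2) unfolding LO_diamond_def by auto
  then have "u \<in> V" "v \<in> V" "w \<in> V" "z \<in> V" using edge_props[OF assms(1)] by blast+
  then show ?thesis using assms(2) unfolding has_forbidden_def by blast
qed

lemma hf_IIZ:
  assumes "two_colored_graph V A B" "IIZ_diamond A B u v w z \<or> IIZ_diamond B A u v w z"
  shows "has_forbidden V A B"
proof -
  have "{u,v} \<in> A \<union> B" "{v,w} \<in> A \<union> B" "{u,z} \<in> A \<union> B"
    using assms(2) unfolding IIZ_diamond_def by auto
  then have "u \<in> V" "v \<in> V" "w \<in> V" "z \<in> V" using edge_props[OF assms(1)] by blast+
  then show ?thesis using assms(2) unfolding has_forbidden_def by blast
qed

lemma hf_CC:
  assumes "two_colored_graph V A B" "CC_hourglass A B u v w z1 z2 \<or> CC_hourglass B A u v w z1 z2"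
  shows "has_forbidden V A B"
proof -
  have "{u,v} \<in> A \<union> B" "{v,w} \<in> A \<union> B" "{u,z1} \<in> A \<union> B" "{v,z2} \<in> A \<union> B"
    using assms(2) unfolding CC_hourglass_def by auto
  then have "u \<in> V" "v \<in> V" "w \<in> V" "z1 \<in> V" "z2 \<in> V" using edge_props[OF assms(1)] by blast+
  then show ?thesis using assms(2) unfolding has_forbidden_def by blast
qed

lemma center_q:
  assumes tcg: "two_colored_graph V A B" and nc: "nice V A B" and P: "bicolored_P3 A B p q r"
    and pq: "{p,q} \<in> A" and qr: "{q,r} \<in> B" and aq: "{a,q} \<in> B"
    and ap: "{a,p} \<notin> A \<union> B" and anp: "a \<noteq> p"
  shows "a = r"
proof -
  have "a \<noteq> q" using edge_props[OF tcg, of a q] aq by auto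
  have ne: "p \<noteq> q" "q \<noteq> r" "p \<noteq> r" using P unfolding bicolored_P3_def by auto
  have "bicolored_P3 A B a q p" unfolding bicolored_P3_def
    using \<open>a \<noteq> q\<close> ne anp aq pq ap by (auto simp: insert_commute)
  moreover have "{{p,q},{a,q}} = {{a,q},{q,p}}" by (auto simp: insert_commute)
  ultimately have f1: "forms_bP3 A B {p,q} {a,q}" unfolding forms_bP3_def by blast
  have f2: "forms_bP3 A B {p,q} {q,r}" unfolding forms_bP3_def using P by blast
  have "{a,q} = {q,r}" using partner_unique[OF tcg nc f1 f2] .
  then show ?thesis using \<open>a \<noteq> q\<close> by (auto simp: doubleton_eq_iff)
qed

lemma center_p:
  assumes tcg: "two_colored_graph V A B" and nc: "nice V A B" and P: "bicolored_P3 A B p q r"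
    and pq: "{p,q} \<in> A" and qr: "{q,r} \<in> B" and ap: "{a,p} \<in> B"
    and aq: "{a,q} \<notin> A \<union> B" and anq: "a \<noteq> q"
  shows False
proof -
  have "a \<noteq> p" using edge_props[OF tcg, of a p] ap by auto
  have ne: "p \<noteq> q" "q \<noteq> r" "p \<noteq> r" using P unfolding bicolored_P3_def by auto
  have "bicolored_P3 A B a p q" unfolding bicolored_P3_def
    using \<open>a \<noteq> p\<close> ne anq aq pq ap by (auto simp: insert_commute)
  moreover have "{{p,q},{a,p}} = {{a,p},{p,q}}" by (auto simp: insert_commute)
  ultimately have f1: "forms_bP3 A B {p,q} {a,p}" unfolding forms_bP3_def by blast
  have f2: "forms_bP3 A B {p,q} {q,r}" unfolding forms_bP3_def using P by blast
  have "{a,p} = {q,r}" using partner_unique[OF tcg nc f1 f2] .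
  then show ?thesis using ne by (auto simp: doubleton_eq_iff)
qed

definition newb :: "'a set set \<Rightarrow> 'a set set \<Rightarrow> 'a \<Rightarrow> 'a \<Rightarrow> bool" where
  "newb A B p q \<longleftrightarrow> (\<exists>x. ({x,p} \<in> A \<and> {x,q} \<in> B) \<or> ({x,p} \<in> B \<and> {x,q} \<in> A))"

lemma newb_sym: "newb A B p q = newb B A p q"
  unfolding newb_def by blast

lemma x_shape:
  assumes tcg: "two_colored_graph V A B" and nc: "nice V A B" and P: "bicolored_P3 A B u v w"
    and uv: "{u,v} \<in> A" and vw: "{v,w} \<in> B"
    and x: "({x,u} \<in> A \<and> {x,v} \<in> B) \<or> ({x,u} \<in> B \<and> {x,v} \<in> A)"
  shows "{x,w} \<notin> A \<union> B \<and> {x,v} \<in> B \<and> {x,u} \<in> A"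
proof -
  have uw: "{u,w} \<notin> A \<union> B" using P unfolding bicolored_P3_def by auto
  have ne: "u \<noteq> v" "v \<noteq> w" "u \<noteq> w" using P unfolding bicolored_P3_def by auto
  have xu: "x \<noteq> u" "x \<noteq> v" using x edge_props[OF tcg, of x u] edge_props[OF tcg, of x v] by auto
  have xw: "x \<noteq> w" using x uw by (auto simp: insert_commute)
  have nf: "\<not> has_forbidden V A B" using nc unfolding nice_def by blast
  have dis: "\<And>e. e \<in> A \<Longrightarrow> e \<in> B \<Longrightarrow> False" using disj[OF tcg] by blast
  show ?thesis
  proof (cases "{x,w} \<in> A \<union> B")
    case True
    have False
    proof (cases "{x,u} \<in> A")
      case xuA: True
      then have xvB: "{x,v} \<in> B" using x dis by blast
      show False
      proof (cases "{x,w} \<in> A")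
        case True
        have "LC_diamond A B u v w x" unfolding LC_diamond_def
          using ne xu xw uv vw xuA xvB True uw by (auto simp: insert_commute)
        then show False using hf_LC[OF tcg] nf by blast
      next
        case False
        then have "{x,w} \<in> B" using \<open>{x,w} \<in> A \<union> B\<close> by blast
        then have "LO_diamond B A w x u v" unfolding LO_diamond_def
          using ne xu xw uv vw xuA xvB uw by (auto simp: insert_commute)
        then show False using hf_LO[OF tcg] nf by blast
      qed
    next
      case False
      then have xuB: "{x,u} \<in> B" and xvA: "{x,v} \<in> A" using x by auto
      show False
      proof (cases "{x,w} \<in> A")
        case True
        have "IIZ_diamond A B u v w x" unfolding IIZ_diamond_def
          using ne xu xw uv vw xuB xvA True uw by (auto simp: insert_commute)
        then show False using hf_IIZ[OF tcg] nf by blast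
      next
        case False
        then have "{x,w} \<in> B" using \<open>{x,w} \<in> A \<union> B\<close> by blast
        then have "LC_diamond B A w v u x" unfolding LC_diamond_def
          using ne xu xw uv vw xuB xvA uw by (auto simp: insert_commute)
        then show False using hf_LC[OF tcg] nf by blast
      qed
    qed
    then show ?thesis ..
  next
    case False
    have P': "bicolored_P3 B A w v u" using bP3_swap[OF P] .
    have "{x,v} \<notin> A"
    proof
      assume "{x,v} \<in> A"
      have wv: "{w,v} \<in> B" using vw by (simp add: insert_commute)
      have vu: "{v,u} \<in> A" using uv by (simp add: insert_commute)
      have xw': "{x,w} \<notin> B \<union> A" using False by blast
      have "x = u"
        using center_q[OF tcg_swap[OF tcg] nice_swap[OF nc] P' wv vu \<open>{x,v} \<in> A\<close> xw' xw] .
      then show False using xu by blast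
    qed
    then show ?thesis using x False by blast
  qed
qed

lemma not_both:
  assumes tcg: "two_colored_graph V A B" and nc: "nice V A B" and P: "bicolored_P3 A B u v w"
    and uv: "{u,v} \<in> A" and vw: "{v,w} \<in> B"
  shows "\<not> newb A B u v \<or> \<not> newb A B w v"
proof (rule ccontr)
  assume "\<not> ?thesis"
  then obtain x y where
    x: "({x,u} \<in> A \<and> {x,v} \<in> B) \<or> ({x,u} \<in> B \<and> {x,v} \<in> A)" and
    y: "({y,w} \<in> B \<and> {y,v} \<in> A) \<or> ({y,w} \<in> A \<and> {y,v} \<in> B)"
    unfolding newb_def by blast
  have X: "{x,w} \<notin> A \<union> B \<and> {x,v} \<in> B \<and> {x,u} \<in> A"
    using x_shape[OF tcg nc P uv vw x] .
  have P': "bicolored_P3 B A w v u" using bP3_swap[OF P] .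
  have Y: "{y,u} \<notin> B \<union> A \<and> {y,v} \<in> A \<and> {y,w} \<in> B"
  proof -
    have wv: "{w,v} \<in> B" using vw by (simp add: insert_commute)
    have vu: "{v,u} \<in> A" using uv by (simp add: insert_commute)
    have y': "({y,w} \<in> B \<and> {y,v} \<in> A) \<or> ({y,w} \<in> A \<and> {y,v} \<in> B)" using y .
    show ?thesis using x_shape[OF tcg_swap[OF tcg] nice_swap[OF nc] P' wv vu y'] by blast
  qed
  have uw: "{u,w} \<notin> A \<union> B" using P unfolding bicolored_P3_def by auto
  have ne: "u \<noteq> v" "v \<noteq> w" "u \<noteq> w" using P unfolding bicolored_P3_def by auto
  have xu: "x \<noteq> u" "x \<noteq> v" using X edge_props[OF tcg, of x u] edge_props[OF tcg, of x v] by auto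
  have yu: "y \<noteq> w" "y \<noteq> v" using Y edge_props[OF tcg, of y w] edge_props[OF tcg, of y v] by auto
  have xw: "x \<noteq> w" using X uw by (auto simp: insert_commute)
  have yw: "y \<noteq> u" using Y uw by (auto simp: insert_commute)
  have xy: "x \<noteq> y" using X Y by (auto simp: insert_commute)
  have nf: "\<not> has_forbidden V A B" using nc unfolding nice_def by blast
  show False
  proof (cases "{x,y} \<in> A \<union> B")
    case False
    have "CC_hourglass A B u v w x y" unfolding CC_hourglass_def
      using ne xu yu xw yw xy X Y uv vw uw False by (auto simp: insert_commute)
    then show False using hf_CC[OF tcg] nf by blast
  next
    case True
    show False
    proof (cases "{x,y} \<in> A")
      case xyA: True
      have "LC_diamond B A w y x v" unfolding LC_diamond_def
        using ne xu yu xw yw xy X Y uv vw uw xyA by (auto simp: insert_commute)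
      then show False using hf_LC[OF tcg] nf by blast
    next
      case False
      then have xyB: "{x,y} \<in> B" using True by blast
      have "LC_diamond A B u x y v" unfolding LC_diamond_def
        using ne xu yu xw yw xy X Y uv vw uw xyB by (auto simp: insert_commute)
      then show False using hf_LC[OF tcg] nf by blast
    qed
  qed
qed

lemma bP3_del:
  assumes "bicolored_P3 (A - {e}) (B - {e}) a b c" "\<not> newb A B p q" "e = {p,q}"
  shows "bicolored_P3 A B a b c \<and> {a,b} \<noteq> e \<and> {b,c} \<noteq> e"
proof -
  have ac: "{a,c} \<noteq> {p,q}"
  proof
    assume h: "{a,c} = {p,q}"
    have "({a,b} \<in> A \<and> {b,c} \<in> B) \<or> ({a,b} \<in> B \<and> {b,c} \<in> A)"
      using assms(1) unfolding bicolored_P3_def by auto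
    then have "({b,a} \<in> A \<and> {b,c} \<in> B) \<or> ({b,a} \<in> B \<and> {b,c} \<in> A)"
      by (simp add: insert_commute)
    moreover have "(a = p \<and> c = q) \<or> (a = q \<and> c = p)" using h by (auto simp: doubleton_eq_iff)
    ultimately have "newb A B p q" unfolding newb_def by blast
    then show False using assms(2) by blast
  qed
  have d: "a \<noteq> b \<and> b \<noteq> c \<and> a \<noteq> c"
    and col: "({a,b} \<in> A - {e} \<and> {b,c} \<in> B - {e}) \<or> ({a,b} \<in> B - {e} \<and> {b,c} \<in> A - {e})"
    and nac: "{a,c} \<notin> (A - {e}) \<union> (B - {e})"
    using assms(1) unfolding bicolored_P3_def by blast+
  have "{a,c} \<notin> A \<union> B" using nac ac assms(3) by blast
  then show ?thesis using d col unfolding bicolored_P3_def by blast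
qed

lemma bP3_keep:
  assumes "bicolored_P3 A B a b c" "{a,b} \<noteq> e" "{b,c} \<noteq> e"
  shows "bicolored_P3 (A - {e}) (B - {e}) a b c"
  using assms unfolding bicolored_P3_def by auto

lemma forms_del:
  assumes "forms_bP3 (A - {e}) (B - {e}) e1 e2" "\<not> newb A B p q" "e = {p,q}"
  shows "forms_bP3 A B e1 e2"
  using assms bP3_del unfolding forms_bP3_def by metis

lemma finite_bP3s:
  assumes "two_colored_graph V A B"
  shows "finite (bP3s A B)"
proof -
  have "bP3s A B \<subseteq> Pow (A \<union> B)"
    unfolding bP3s_def bicolored_P3_def by auto
  then show ?thesis using finite_E[OF assms] finite_subset by blast
qed

lemma bP3s_del:
  assumes tcg: "two_colored_graph V A B" and nc: "nice V A B" and P: "bicolored_P3 A B p q r"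
    and nn: "\<not> newb A B p q"
  shows "bP3s (A - {{p,q}}) (B - {{p,q}}) = bP3s A B - {{{p,q},{q,r}}}"
proof
  show "bP3s (A - {{p,q}}) (B - {{p,q}}) \<subseteq> bP3s A B - {{{p,q},{q,r}}}"
  proof
    fix s assume "s \<in> bP3s (A - {{p,q}}) (B - {{p,q}})"
    then obtain a b c where s: "s = {{a,b},{b,c}}" and h: "bicolored_P3 (A - {{p,q}}) (B - {{p,q}}) a b c"
      unfolding bP3s_def by blast
    have h2: "bicolored_P3 A B a b c \<and> {a,b} \<noteq> {p,q} \<and> {b,c} \<noteq> {p,q}"
      using bP3_del[OF h nn refl] .
    then have "s \<in> bP3s A B" unfolding bP3s_def s by blast
    moreover have "{p,q} \<notin> s" unfolding s insert_iff empty_iff using h2 by metis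
    moreover have "s \<noteq> {{p,q},{q,r}}" using calculation(2) by blast
    ultimately show "s \<in> bP3s A B - {{{p,q},{q,r}}}" by blast
  qed
next
  show "bP3s A B - {{{p,q},{q,r}}} \<subseteq> bP3s (A - {{p,q}}) (B - {{p,q}})"
  proof
    fix s assume sm: "s \<in> bP3s A B - {{{p,q},{q,r}}}"
    have s1: "s \<in> bP3s A B" using DiffD1[OF sm] .
    have sn: "s \<noteq> {{p,q},{q,r}}" using DiffD2[OF sm] by blast
    from s1 obtain a b c where s: "s = {{a,b},{b,c}}" and h: "bicolored_P3 A B a b c"
      unfolding bP3s_def by blast
    have f2: "forms_bP3 A B {p,q} {q,r}" unfolding forms_bP3_def using P by blast
    have ne: "p \<noteq> q" "q \<noteq> r" "p \<noteq> r" using P unfolding bicolored_P3_def by auto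
    have abn: "{a,b} \<noteq> {p,q}"
    proof
      assume ab: "{a,b} = {p,q}"
      then have "forms_bP3 A B {p,q} {b,c}" unfolding forms_bP3_def using h by blast
      then have "{b,c} = {q,r}" using partner_unique[OF tcg nc _ f2] by blast
      then show False using sn s ab by simp
    qed
    have bcn: "{b,c} \<noteq> {p,q}"
    proof
      assume bc: "{b,c} = {p,q}"
      have "{{p,q},{a,b}} = {{a,b},{b,c}}" using bc by auto
      then have "forms_bP3 A B {p,q} {a,b}" unfolding forms_bP3_def using h by blast
      then have "{a,b} = {q,r}" using partner_unique[OF tcg nc _ f2] by blast
      moreover have "{{q,r},{p,q}} = {{p,q},{q,r}}" by (rule insert_commute)
      ultimately show False using sn s bc by simp
    qed
    have "bicolored_P3 (A - {{p,q}}) (B - {{p,q}}) a b c" using bP3_keep[OF h abn bcn] .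
    then show "s \<in> bP3s (A - {{p,q}}) (B - {{p,q}})" unfolding bP3s_def s by blast
  qed
qed

lemma num_del:
  assumes tcg: "two_colored_graph V A B" and nc: "nice V A B" and P: "bicolored_P3 A B p q r"
    and nn: "\<not> newb A B p q"
  shows "num_bP3 (A - {{p,q}}) (B - {{p,q}}) = num_bP3 A B - 1"
proof -
  have "{{p,q},{q,r}} \<in> bP3s A B" unfolding bP3s_def using P by blast
  then show ?thesis unfolding num_bP3_def bP3s_del[OF assms]
    using finite_bP3s[OF tcg] by (simp add: card_Diff_singleton)
qed

definition CCm :: "'a set set \<Rightarrow> 'a set set \<Rightarrow> 'a \<Rightarrow> 'a \<Rightarrow> 'a \<Rightarrow> 'a \<Rightarrow> 'a \<Rightarrow> bool" where
  "CCm X Y a b c z1 z2 \<longleftrightarrow> distinct [a,b,c,z1,z2] \<and>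
     {a,b} \<in> X \<and> {b,c} \<in> Y \<and> {a,z1} \<in> X \<and> {b,z1} \<in> Y \<and> {b,z2} \<in> X \<and> {c,z2} \<in> Y \<and>
     {a,c} \<notin> X \<union> Y \<and> {c,z1} \<notin> X \<union> Y \<and> {z1,z2} \<notin> X \<union> Y"

definition CCm' :: "'a set set \<Rightarrow> 'a set set \<Rightarrow> 'a \<Rightarrow> 'a \<Rightarrow> 'a \<Rightarrow> 'a \<Rightarrow> 'a \<Rightarrow> bool" where
  "CCm' X Y a b c z1 z2 \<longleftrightarrow> distinct [a,b,c,z1,z2] \<and>
     {a,b} \<in> X \<and> {b,c} \<in> Y \<and> {a,z1} \<in> X \<and> {b,z1} \<in> Y \<and> {b,z2} \<in> X \<and> {c,z2} \<in> Y \<and>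
     {a,c} \<notin> X \<union> Y \<and> {a,z2} \<notin> X \<union> Y \<and> {z1,z2} \<notin> X \<union> Y"

lemma CCm'_rev: "CCm' X Y a b c z1 z2 \<Longrightarrow> CCm Y X c b a z2 z1"
  unfolding CCm_def CCm'_def by (auto simp: insert_commute)

lemma LC_del: "LC_diamond (X - {e}) (Y - {e}) a b c d \<Longrightarrow>
  LC_diamond X Y a b c d \<or> (e = {a,c} \<and> {a,b} \<in> X \<and> {b,c} \<in> Y)"
  unfolding LC_diamond_def by (cases "e = {a,c}") auto

lemma LO_del: "LO_diamond (X - {e}) (Y - {e}) a b c d \<Longrightarrow>
  LO_diamond X Y a b c d \<or> (e = {a,c} \<and> {a,b} \<in> X \<and> {b,c} \<in> Y)"
  unfolding LO_diamond_def by (cases "e = {a,c}") auto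

lemma IIZ_del: "IIZ_diamond (X - {e}) (Y - {e}) a b c d \<Longrightarrow>
  IIZ_diamond X Y a b c d \<or> (e = {a,c} \<and> {a,b} \<in> X \<and> {b,c} \<in> Y)"
  unfolding IIZ_diamond_def by (cases "e = {a,c}") auto

lemma CC_del: "CC_hourglass (X - {e}) (Y - {e}) a b c z1 z2 \<Longrightarrow>
  (CC_hourglass X Y a b c z1 z2 \<or> (e = {a,c} \<and> {a,b} \<in> X \<and> {b,c} \<in> Y) \<or>
  (e = {z2,z1} \<and> {z2,b} \<in> X \<and> {b,z1} \<in> Y) \<or>
  (e = {a,z2} \<and> CCm X Y a b c z1 z2) \<or> (e = {c,z1} \<and> CCm' X Y a b c z1 z2))"
proof -
  assume h: "CC_hourglass (X - {e}) (Y - {e}) a b c z1 z2"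
  have d: "distinct [a,b,c,z1,z2]"
    and m: "{a,b} \<in> X" "{b,c} \<in> Y" "{a,z1} \<in> X" "{b,z1} \<in> Y" "{b,z2} \<in> X" "{c,z2} \<in> Y"
    and n0: "{a,c} \<notin> (X - {e}) \<union> (Y - {e})" "{a,z2} \<notin> (X - {e}) \<union> (Y - {e})"
      "{c,z1} \<notin> (X - {e}) \<union> (Y - {e})" "{z1,z2} \<notin> (X - {e}) \<union> (Y - {e})"
    using h unfolding CC_hourglass_def by (simp_all only: Diff_iff, blast+)
  have nd: "\<And>x. x \<notin> (X - {e}) \<union> (Y - {e}) \<Longrightarrow> x \<in> X \<union> Y \<Longrightarrow> x = e" by blast
  note n = nd[OF n0(1)] nd[OF n0(2)] nd[OF n0(3)] nd[OF n0(4)]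
  have ne: "{a,c} \<noteq> {a,z2}" "{a,c} \<noteq> {c,z1}" "{a,c} \<noteq> {z1,z2}" "{a,z2} \<noteq> {c,z1}"
    "{a,z2} \<noteq> {z1,z2}" "{c,z1} \<noteq> {z1,z2}" using d by (auto simp: doubleton_eq_iff)
  have z21: "{z2,z1} = {z1,z2}" "{z2,b} = {b,z2}" by (simp_all add: insert_commute)
  show ?thesis
  proof (cases "e = {a,c}")
    case True then show ?thesis using m by blast
  next
    case F1: False
    show ?thesis
    proof (cases "e = {z1,z2}")
      case True then show ?thesis using m z21 by simp
    next
      case F2: False
      show ?thesis
      proof (cases "e = {a,z2}")
        case True
        have "CCm X Y a b c z1 z2" unfolding CCm_def using d m n F1 F2 True ne by metis
        then show ?thesis using True by blast
      next
        case F3: False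
        show ?thesis
        proof (cases "e = {c,z1}")
          case True
          have "CCm' X Y a b c z1 z2" unfolding CCm'_def using d m n F1 F2 True ne by metis
          then show ?thesis using True by blast
        next
          case F4: False
          have "CC_hourglass X Y a b c z1 z2" unfolding CC_hourglass_def using d m n F1 F2 F3 F4 by metis
          then show ?thesis by blast
        qed
      qed
    qed
  qed
qed

lemma newb_from:
  assumes "{a,c} = {p,q}" "{a,b} \<in> X" "{b,c} \<in> Y" "(X = A \<and> Y = B) \<or> (X = B \<and> Y = A)"
  shows "newb A B p q"
proof -
  have "{b,a} \<in> X" using assms(2) by (simp add: insert_commute)
  moreover have "(a = p \<and> c = q) \<or> (a = q \<and> c = p)" using assms(1) by (auto simp: doubleton_eq_iff)
  ultimately show ?thesis unfolding newb_def using assms(3,4) by blast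
qed

lemma hg_special:
  assumes tcg: "two_colored_graph V A B" and nc: "nice V A B" and P: "bicolored_P3 A B p q r"
    and pq: "{p,q} \<in> A" and qr: "{q,r} \<in> B" and e: "{a,z2} = {p,q}"
    and H: "CCm X Y a b c z1 z2" and XY: "(X = A \<and> Y = B) \<or> (X = B \<and> Y = A)"
  shows False
proof -
  have nf: "\<not> has_forbidden V A B" using nc unfolding nice_def by blast
  have dis: "\<And>e. e \<in> A \<Longrightarrow> e \<in> B \<Longrightarrow> False" using disj[OF tcg] by blast
  have pr: "{p,r} \<notin> A \<union> B" using P unfolding bicolored_P3_def by auto
  have d: "distinct [a,b,c,z1,z2]" and h1: "{a,b} \<in> X" "{b,c} \<in> Y" "{a,z1} \<in> X" "{b,z1} \<in> Y"
    "{b,z2} \<in> X" "{c,z2} \<in> Y" and h2: "{a,c} \<notin> X \<union> Y" "{c,z1} \<notin> X \<union> Y" "{z1,z2} \<notin> X \<union> Y"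
    using H unfolding CCm_def by blast+
  have XYu: "X \<union> Y = A \<union> B" using XY by blast
  have "(p = a \<and> q = z2) \<or> (p = z2 \<and> q = a)" using e by (auto simp: doubleton_eq_iff)
  then show False
  proof
    assume pa: "p = a \<and> q = z2"
    have XA: "X = A"
    proof (rule ccontr)
      assume "X \<noteq> A"
      then have "X = B" using XY by blast
      have "{z1,p} \<in> B" using h1(3) pa \<open>X = B\<close> by (simp add: insert_commute)
      moreover have "{z1,q} \<notin> A \<union> B" using h2(3) pa XYu by simp
      moreover have "z1 \<noteq> q" using d pa by auto
      ultimately show False using center_p[OF tcg nc P pq qr] by blast
    qed
    then have YB: "Y = B" using XY dis pq by blast
    have "{c,q} \<in> B" using h1(6) pa YB by (simp add: insert_commute)
    moreover have "{c,p} \<notin> A \<union> B" using h2(1) pa XYu by (simp add: insert_commute)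
    moreover have "c \<noteq> p" using d pa by auto
    ultimately have cr: "c = r" using center_q[OF tcg nc P pq qr] by blast
    have "LO_diamond A B p q r b" unfolding LO_diamond_def
      using d pa cr h1 XA YB pq qr pr by (auto simp: insert_commute)
    then show False using hf_LO[OF tcg] nf by blast
  next
    assume pa: "p = z2 \<and> q = a"
    have YA: "Y = A"
    proof (rule ccontr)
      assume "Y \<noteq> A"
      then have "Y = B" using XY by blast
      have "{c,p} \<in> B" using h1(6) pa \<open>Y = B\<close> by simp
      moreover have "{c,q} \<notin> A \<union> B" using h2(1) pa XYu by (simp add: insert_commute)
      moreover have "c \<noteq> q" using d pa by auto
      ultimately show False using center_p[OF tcg nc P pq qr] by blast
    qed
    then have XB: "X = B" using XY dis pq by blast
    have "{z1,q} \<in> B" using h1(3) pa XB by (simp add: insert_commute)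
    moreover have "{z1,p} \<notin> A \<union> B" using h2(3) pa XYu by simp
    moreover have "z1 \<noteq> p" using d pa by auto
    ultimately have zr: "z1 = r" using center_q[OF tcg nc P pq qr] by blast
    have "IIZ_diamond B A r q p b" unfolding IIZ_diamond_def
      using d pa zr h1 XB YA pq qr pr by (auto simp: insert_commute)
    then show False using hf_IIZ[OF tcg] nf by blast
  qed
qed

lemma nice_del:
  assumes tcg: "two_colored_graph V A B" and nc: "nice V A B" and P: "bicolored_P3 A B p q r"
    and pq: "{p,q} \<in> A" and qr: "{q,r} \<in> B" and nn: "\<not> newb A B p q"
  shows "nice V (A - {{p,q}}) (B - {{p,q}})"
proof -
  have part: "\<forall>e' \<in> (A - {{p,q}}) \<union> (B - {{p,q}}).
      card {e''. forms_bP3 (A - {{p,q}}) (B - {{p,q}}) e' e''} \<le> 1"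
  proof
    fix e' assume "e' \<in> (A - {{p,q}}) \<union> (B - {{p,q}})"
    then have e'E: "e' \<in> A \<union> B" by blast
    have sub: "{e''. forms_bP3 (A - {{p,q}}) (B - {{p,q}}) e' e''} \<subseteq> {e''. forms_bP3 A B e' e''}"
      using forms_del[OF _ nn refl] by blast
    have sub2: "{e''. forms_bP3 A B e' e''} \<subseteq> A \<union> B" using forms_edge(1) by blast
    have fin: "finite {e''. forms_bP3 A B e' e''}" using finite_subset[OF sub2 finite_E[OF tcg]] .
    have "card {e''. forms_bP3 A B e' e''} \<le> 1" using nc e'E unfolding nice_def by blast
    then show "card {e''. forms_bP3 (A - {{p,q}}) (B - {{p,q}}) e' e''} \<le> 1"
      using card_mono[OF fin sub] by linarith
  qed
  have nf0: "\<not> has_forbidden V A B" using nc unfolding nice_def by blast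
  have nf: "\<not> has_forbidden V (A - {{p,q}}) (B - {{p,q}})"
  proof
    assume "has_forbidden V (A - {{p,q}}) (B - {{p,q}})"
    then obtain X Y u v w z where XY: "(X = A \<and> Y = B) \<or> (X = B \<and> Y = A)" and
      S: "LC_diamond (X - {{p,q}}) (Y - {{p,q}}) u v w z \<or> LO_diamond (X - {{p,q}}) (Y - {{p,q}}) u v w z \<or>
          IIZ_diamond (X - {{p,q}}) (Y - {{p,q}}) u v w z \<or>
          (\<exists>z2. CC_hourglass (X - {{p,q}}) (Y - {{p,q}}) u v w z z2)"
      unfolding has_forbidden_def by blast
    have XY': "(Y = A \<and> X = B) \<or> (Y = B \<and> X = A)" using XY by blast
    have nb: "\<And>a b c. {a,c} = {p,q} \<Longrightarrow> {a,b} \<in> X \<Longrightarrow> {b,c} \<in> Y \<Longrightarrow> False"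
      using newb_from[OF _ _ _ XY] nn by blast
    from S show False
    proof (elim disjE exE)
      assume "LC_diamond (X - {{p,q}}) (Y - {{p,q}}) u v w z"
      from LC_del[OF this] show False
      proof
        assume "LC_diamond X Y u v w z" then show False using hf_LC[OF tcg] nf0 XY by blast
      qed (use nb in metis)
    next
      assume "LO_diamond (X - {{p,q}}) (Y - {{p,q}}) u v w z"
      from LO_del[OF this] show False
      proof
        assume "LO_diamond X Y u v w z" then show False using hf_LO[OF tcg] nf0 XY by blast
      qed (use nb in metis)
    next
      assume "IIZ_diamond (X - {{p,q}}) (Y - {{p,q}}) u v w z"
      from IIZ_del[OF this] show False
      proof
        assume "IIZ_diamond X Y u v w z" then show False using hf_IIZ[OF tcg] nf0 XY by blast
      qed (use nb in metis)
    next
      fix z2 assume "CC_hourglass (X - {{p,q}}) (Y - {{p,q}}) u v w z z2"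
      from CC_del[OF this] show False
      proof (elim disjE)
        assume "CC_hourglass X Y u v w z z2" then show False using hf_CC[OF tcg] nf0 XY by blast
      next
        assume "{p,q} = {u,w} \<and> {u,v} \<in> X \<and> {v,w} \<in> Y" then show False using nb by metis
      next
        assume "{p,q} = {z2,z} \<and> {z2,v} \<in> X \<and> {v,z} \<in> Y" then show False using nb by metis
      next
        assume h: "{p,q} = {u,z2} \<and> CCm X Y u v w z z2"
        show False using hg_special[OF tcg nc P pq qr _ _ XY] h by metis
      next
        assume h: "{p,q} = {w,z} \<and> CCm' X Y u v w z z2"
        have "CCm Y X w v u z2 z" using CCm'_rev[OF conjunct2[OF h]] .
        then show False using hg_special[OF tcg nc P pq qr _ _ XY'] h by metis
      qed
    qed
  qed
  show ?thesis unfolding nice_def using part nf by blast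
qed

lemma main_AB:
  assumes tcg: "two_colored_graph V A B" and nc: "nice V A B" and P: "bicolored_P3 A B u v w"
    and uv: "{u,v} \<in> A" and vw: "{v,w} \<in> B"
  shows "\<exists>e \<in> {{u,v},{v,w}}. num_bP3 (A - {e}) (B - {e}) = num_bP3 A B - 1 \<and> nice V (A - {e}) (B - {e})"
proof (cases "newb A B u v")
  case False
  then show ?thesis using num_del[OF tcg nc P False] nice_del[OF tcg nc P uv vw False] by blast
next
  case True
  then have nn: "\<not> newb B A w v" using not_both[OF tcg nc P uv vw] newb_sym by metis
  have P': "bicolored_P3 B A w v u" using bP3_swap[OF P] .
  have wv: "{w,v} \<in> B" using vw by (simp add: insert_commute)
  have vu: "{v,u} \<in> A" using uv by (simp add: insert_commute)
  have n1: "num_bP3 (B - {{w,v}}) (A - {{w,v}}) = num_bP3 B A - 1"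
    using num_del[OF tcg_swap[OF tcg] nice_swap[OF nc] P' nn] .
  have n2: "nice V (B - {{w,v}}) (A - {{w,v}})"
    using nice_del[OF tcg_swap[OF tcg] nice_swap[OF nc] P' wv vu nn] .
  have wv': "{w,v} = {v,w}" by (rule insert_commute)
  have "num_bP3 (A - {{v,w}}) (B - {{v,w}}) = num_bP3 A B - 1"
    using n1 unfolding wv' by (metis num_sym)
  moreover have "nice V (A - {{v,w}}) (B - {{v,w}})"
    using n2 unfolding wv' by (metis nice_sym)
  ultimately show ?thesis by blast
qed

theorem proposition1:
  fixes V :: "'a set" and Er Eb :: "'a set set" and e1 e2 :: "'a set"
  assumes "two_colored_graph V Er Eb"
    and "nice V Er Eb"
    and "forms_bP3 Er Eb e1 e2"
  shows "\<exists>e \<in> {e1, e2}.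
           num_bP3 (Er - {e}) (Eb - {e}) = num_bP3 Er Eb - 1 \<and>
           nice V (Er - {e}) (Eb - {e})"
proof -
  obtain u v w where P: "bicolored_P3 Er Eb u v w" and E: "{e1,e2} = {{u,v},{v,w}}"
    using assms(3) unfolding forms_bP3_def by blast
  have "({u,v} \<in> Er \<and> {v,w} \<in> Eb) \<or> ({u,v} \<in> Eb \<and> {v,w} \<in> Er)"
    using P unfolding bicolored_P3_def by blast
  then have "\<exists>e \<in> {{u,v},{v,w}}. num_bP3 (Er - {e}) (Eb - {e}) = num_bP3 Er Eb - 1 \<and>
           nice V (Er - {e}) (Eb - {e})"
  proof
    assume "{u,v} \<in> Er \<and> {v,w} \<in> Eb"
    then show ?thesis using main_AB[OF assms(1,2) P] by blast
  next
    assume h: "{u,v} \<in> Eb \<and> {v,w} \<in> Er"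
    have P': "bicolored_P3 Eb Er u v w" using P bP3_sym by metis
    obtain e where "e \<in> {{u,v},{v,w}}" "num_bP3 (Eb - {e}) (Er - {e}) = num_bP3 Eb Er - 1"
      "nice V (Eb - {e}) (Er - {e})"
      using main_AB[OF tcg_swap[OF assms(1)] nice_swap[OF assms(2)] P'] h by blast
    then show ?thesis using num_sym nice_sym by metis
  qed
  then show ?thesis unfolding E[symmetric] .
qed

end
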